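(* Let $\mathcal{A}$ be a finite list of elements of a finitely generated abelian group $\Gamma$, let $G$ be a torsion-wise finite abelian group, and suppose $\mathcal{A}\subset\Gamma_{\mathrm{tor}}$. Then $$T^G_{\mathcal{A}}(x,y)=\sum_{k=0}^{\#\mathcal{A}}\Bigg(\sum_{\substack{\mathcal{S}\subset\mathcal{A}\\ \#\mathcal{S}=k}}\#\mathcal{M}(\mathcal{A}/\mathcal{S};\Gamma_{\mathrm{tor}}/\langle\mathcal{S}\rangle,G)\Bigg)y^k.$$ In particular $T^G_{\mathcal{A}}(x,y)$ is a polynomial in $y$ alone whose coefficients are non-negative integers.
   Context: $G$ is torsion-wise finite if $G[d]=\{x\in G\mid dx=0\}$ is finite for all $d>0$. Sublists are distinguished by index. $r_{\mathcal{S}}$ is the rank of $\langle\mathcal{S}\rangle$, $m(\mathcal{S};G)=\#\mathrm{Hom}((\Gamma/\langle\mathcal{S}\rangle)_{\mathrm{tor}},G)$, $T^G_{\mathcal{A}}(x,y)=\sum_{\mathcal{S}\subset\mathcal{A}}m(\mathcal{S};G)(x-1)^{r_{\mathcal{A}}-r_{\mathcal{S}}}(y-1)^{\#\mathcal{S}-r_{\mathcal{S}}}$. For a list $\mathcal{B}$ in an abelian group $\Lambda$, $\mathcal{M}(\mathcal{B};\Lambda,G)=\mathrm{Hom}(\Lambda,G)\smallsetminus\bigcup_{\beta\in\mathcal{B}}\{\varphi\mid\varphi(\beta)=0\}$; the contraction $\mathcal{A}/\mathcal{S}$ is the list of cosets $\{\overline\alpha\mid\alpha\in\mathcal{A}\smallsetminus\mathcal{S}\}$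 in $\Gamma_{\mathrm{tor}}/\langle\mathcal{S}\rangle$. *)

theory Defs
  imports "HOL-Algebra.Algebra"
begin

(* Abelian groups are HOL-Algebra groups (written multiplicatively). *)

definition tor :: "('a,'b) monoid_scheme \<Rightarrow> 'a set" where
  "tor G = {x \<in> carrier G. \<exists>n::nat. n > 0 \<and> x [^]\<^bsub>G\<^esub> n = \<one>\<^bsub>G\<^esub>}"

definition tor_group :: "('a,'b) monoid_scheme \<Rightarrow> ('a,'b) monoid_scheme" where
  "tor_group G = G\<lparr>carrier := tor G\<rparr>"

definition torsion_wise_finite :: "('a,'b) monoid_scheme \<Rightarrow> bool" where
  "torsion_wise_finite G \<longleftrightarrow>
     (\<forall>d::nat. d > 0 \<longrightarrow> finite {x \<in> carrier G. x [^]\<^bsub>G\<^esub> d = \<one>\<^bsub>G\<^esub>})"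

definition finitely_generated :: "('a,'b) monoid_scheme \<Rightarrow> bool" where
  "finitely_generated G \<longleftrightarrow>
     (\<exists>Y. finite Y \<and> Y \<subseteq> carrier G \<and> generate G Y = carrier G)"

definition Z_lin_indep :: "('a,'b) monoid_scheme \<Rightarrow> 'a set \<Rightarrow> bool" where
  "Z_lin_indep G Y \<longleftrightarrow> finite Y \<and> Y \<subseteq> carrier G \<and>
     (\<forall>c :: 'a \<Rightarrow> int. finprod G (\<lambda>x. x [^]\<^bsub>G\<^esub> c x) Y = \<one>\<^bsub>G\<^esub>
         \<longrightarrow> (\<forall>x\<in>Y. c x = 0))"

definition rank_of :: "('a,'b) monoid_scheme \<Rightarrow> 'a set \<Rightarrow> nat" where
  "rank_of G H = Sup {card Y | Y. Y \<subseteq> H \<and> Z_lin_indep G Y}"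

(* the set Hom(A,B) of homomorphisms, made extensional so it can be counted *)
definition Homs :: "('a,'b) monoid_scheme \<Rightarrow> ('c,'d) monoid_scheme \<Rightarrow> ('a \<Rightarrow> 'c) set" where
  "Homs A B = {f. f \<in> hom A B \<and> f \<in> extensional (carrier A)}"

(* a sublist of the list As is given by a set of indices *)
definition span_idx :: "('a,'b) monoid_scheme \<Rightarrow> 'a list \<Rightarrow> nat set \<Rightarrow> 'a set" where
  "span_idx \<Gamma> As S = generate \<Gamma> ((\<lambda>i. As ! i) ` S)"

definition m_mult :: "('a,'b) monoid_scheme \<Rightarrow> 'a list \<Rightarrow> nat set \<Rightarrow> ('c,'d) monoid_scheme \<Rightarrow> nat" where
  "m_mult \<Gamma> As S G = card (Homs (tor_group (\<Gamma> Mod span_idx \<Gamma> As S)) G)"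

(* arithmetic Tutte polynomial T^G_A(x,y), evaluated in an arbitrary commutative ring *)
definition tutteG :: "('a,'b) monoid_scheme \<Rightarrow> 'a list \<Rightarrow> ('c,'d) monoid_scheme
    \<Rightarrow> 'r::comm_ring_1 \<Rightarrow> 'r \<Rightarrow> 'r" where
  "tutteG \<Gamma> As G x y =
     (\<Sum>S\<in>Pow {0..<length As}.
        of_nat (m_mult \<Gamma> As S G)
        * (x - 1) ^ (rank_of \<Gamma> (span_idx \<Gamma> As {0..<length As}) - rank_of \<Gamma> (span_idx \<Gamma> As S))
        * (y - 1) ^ (card S - rank_of \<Gamma> (span_idx \<Gamma> As S)))"

(* M(B;\<Lambda>,G) for B the list of cosets of the elements of As \ S in \<Lambda> = \<Gamma>_tor/<S> *)
definition M_contr :: "('a,'b) monoid_scheme \<Rightarrow> 'a list \<Rightarrow> nat set \<Rightarrow> ('c,'d) monoid_scheme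
    \<Rightarrow> ('a set \<Rightarrow> 'c) set" where
  "M_contr \<Gamma> As S G =
     {\<phi> \<in> Homs (tor_group \<Gamma> Mod span_idx \<Gamma> As S) G.
        \<forall>i\<in>{0..<length As} - S. \<phi> (span_idx \<Gamma> As S #>\<^bsub>\<Gamma>\<^esub> (As ! i)) \<noteq> \<one>\<^bsub>G\<^esub>}"

end

theory Submission
  imports Defs
begin

context comm_group
begin

lemma gen_insert_repr:
  assumes y: "y \<in> carrier G" and Y: "Y \<subseteq> carrier G" and t: "t \<in> generate G (insert y Y)"
  shows "\<exists>k::int. \<exists>g\<in>generate G Y. t = y [^] k \<otimes> g"
  using t
proof (induction t rule: generate.induct)
  case one
  then show ?case by (intro exI[of _ 0] bexI[of _ \<one>]) (auto intro: generate.one)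
next
  case (incl h)
  then show ?case
  proof
    assume "h = y" then show ?thesis using y by (intro exI[of _ 1] bexI[of _ "\<one>"]) (auto intro: generate.one)
  next
    assume "h \<in> Y" then show ?thesis using Y by (intro exI[of _ 0] bexI[of _ h]) (auto intro: generate.incl)
  qed
next
  case (inv h)
  then show ?case
  proof
    assume "h = y" then show ?thesis using y
      by (intro exI[of _ "-1"] bexI[of _ "\<one>"]) (auto intro: generate.one simp: int_pow_neg)
  next
    assume "h \<in> Y" then show ?thesis using Y by (intro exI[of _ 0] bexI[of _ "inv h"]) (auto intro: generate.inv)
  qed
next
  case (eng h1 h2)
  from eng.IH(1) obtain a :: int and g1 where g1: "g1 \<in> generate G Y" "h1 = y [^] a \<otimes> g1" by blast
  from eng.IH(2) obtain b :: int and g2 where g2: "g2 \<in> generate G Y" "h2 = y [^] b \<otimes> g2" by blast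
  note g = g1(1) g2(1) and h = g1(2) g2(2)
  have gc: "g1 \<in> carrier G" "g2 \<in> carrier G" using g generate_in_carrier Y by auto
  have "h1 \<otimes> h2 = y [^] (a + b) \<otimes> (g1 \<otimes> g2)"
    using h gc y by (simp add: int_pow_mult m_ac)
  then show ?case using g by (intro exI[of _ "a+b"] bexI[of _ "g1 \<otimes> g2"]) (auto intro: generate.eng)
qed

lemma tor_fin_aux:
  assumes "finite Y" "Y \<subseteq> carrier G"
  shows "(\<exists>e::nat>0. \<forall>t\<in>generate G Y. (\<exists>n::nat>0. t [^] n = \<one>) \<longrightarrow> t [^] e = \<one>)
        \<and> (\<forall>d::nat>0. finite {t\<in>generate G Y. t [^] d = \<one>})"
  using assms
proof (induction Y rule: finite_induct)
  case empty
  show ?case by (auto simp: generate_empty intro!: exI[of _ "1::nat"])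
next
  case (insert y Y)
  define K where "K = generate G Y"
  define K' where "K' = generate G (insert y Y)"
  have y: "y \<in> carrier G" and Y: "Y \<subseteq> carrier G" using insert by auto
  have subK: "subgroup K G" by (simp add: K_def generate_is_subgroup Y)
  have KC: "K \<subseteq> carrier G" using subK subgroup.subset by blast
  obtain e :: nat where e: "e > 0" "\<And>t n. t\<in>K \<Longrightarrow> n > 0 \<Longrightarrow> t [^] (n::nat) = \<one> \<Longrightarrow> t [^] e = \<one>"
    using insert.IH Y unfolding K_def by blast
  have fin: "\<And>d::nat. d>0 \<Longrightarrow> finite {t\<in>K. t[^]d = \<one>}" using insert.IH Y unfolding K_def by blast
  have repr: "\<And>t. t \<in> K' \<Longrightarrow> \<exists>k::int. \<exists>g\<in>K. t = y[^]k \<otimes> g"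
    using gen_insert_repr[OF y Y] unfolding K_def K'_def by blast
  have K'C: "K' \<subseteq> carrier G" unfolding K'_def using y Y by (meson generate_in_carrier insert_subset subsetI)
  have "(\<exists>e::nat>0. \<forall>t\<in>K'. (\<exists>n::nat>0. t [^] n = \<one>) \<longrightarrow> t [^] e = \<one>)
        \<and> (\<forall>d::nat>0. finite {t\<in>K'. t [^] d = \<one>})"
  proof (cases "\<exists>m::nat>0. y [^] m \<in> K")
    case True
    then obtain m :: nat where m: "m>0" "y[^]m \<in> K" by blast
    have repr2: "\<exists>j<m. \<exists>g\<in>K. t = y[^]j \<otimes> g" if "t \<in> K'" for t
    proof -
      obtain k g where g: "g\<in>K" and t: "t = y[^](k::int) \<otimes> g" using repr \<open>t \<in> K'\<close> by blast
      have "k = k mod int m + int m * (k div int m)" by simp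
      then have "y[^]k = y[^](k mod int m) \<otimes> y[^](int m * (k div int m))"
        using y by (metis int_pow_mult)
      also have "y[^](int m * (k div int m)) = (y[^]m)[^](k div int m)"
        using y by (simp add: int_pow_pow int_pow_int[symmetric])
      also have "y[^](k mod int m) = y[^](nat (k mod int m))"
        using m by (simp add: int_pow_int[symmetric])
      finally have "t = y[^](nat (k mod int m)) \<otimes> ((y[^]m)[^](k div int m) \<otimes> g)"
        using t y g KC by (simp add: m_assoc subsetD)
      moreover have "(y[^]m)[^](k div int m) \<otimes> g \<in> K"
        using subK m g by (simp add: subgroup_int_pow_closed subgroup.m_closed)
      moreover have "nat (k mod int m) < m" using m by (simp add: nat_less_iff)
      ultimately show ?thesis by blast
    qed
    have powm: "t[^]m \<in> K" if "t \<in> K'" for t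
    proof -
      obtain j g where j: "j<m" and g: "g\<in>K" and t: "t = y[^]j \<otimes> g" using repr2 \<open>t \<in> K'\<close> by blast
      have gc: "g \<in> carrier G" using g KC by blast
      have "t[^]m = (y[^]j)[^]m \<otimes> g[^]m" using t y gc by (simp add: pow_mult_distrib m_comm)
      also have "(y[^]j)[^]m = (y[^]m)[^]j" using y by (simp add: nat_pow_pow mult.commute)
      finally show ?thesis using subK m g
        by (metis subgroup.m_closed subgroup_int_pow_closed int_pow_int)
    qed
    show ?thesis
    proof (intro conjI)
      show "\<exists>e::nat>0. \<forall>t\<in>K'. (\<exists>n::nat>0. t [^] n = \<one>) \<longrightarrow> t [^] e = \<one>"
      proof (intro exI[of _ "m*e"] conjI ballI impI)
        show "m*e > 0" using m e by simp
        fix t assume t: "t \<in> K'" and "\<exists>n::nat>0. t [^] n = \<one>"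
        then obtain n :: nat where n: "n>0" "t[^]n = \<one>" by blast
        have tc: "t \<in> carrier G" using t K'C by blast
        have "(t[^]m)[^]n = \<one>" using tc n by (metis nat_pow_pow mult.commute nat_pow_one)
        then have "(t[^]m)[^]e = \<one>" using e(2)[OF powm[OF t] n(1)] by blast
        then show "t[^](m*e) = \<one>" using tc by (simp add: nat_pow_pow)
      qed
    next
      show "\<forall>d::nat>0. finite {t\<in>K'. t [^] d = \<one>}"
      proof (intro allI impI)
        fix d :: nat assume d: "d > 0"
        define g0 where "g0 j u = (SOME g. g \<in> K \<and> (y[^](j::nat) \<otimes> g)[^]m = u)" for j u
        have "{t\<in>K'. t [^] d = \<one>} \<subseteq> (\<lambda>(j,u,v). y[^]j \<otimes> g0 j u \<otimes> v) ` ({..<m} \<times> {u\<in>K. u[^]d = \<one>} \<times> {v\<in>K. v[^]m = \<one>})"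
        proof
          fix t assume "t \<in> {t\<in>K'. t [^] d = \<one>}"
          then have t: "t \<in> K'" "t[^]d = \<one>" by auto
          have tc: "t \<in> carrier G" using t K'C by blast
          obtain j g where j: "j<m" and g: "g\<in>K" and tj: "t = y[^]j \<otimes> g" using repr2 t(1) by blast
          have gc: "g \<in> carrier G" using g KC by blast
          define u where "u = t[^]m"
          have uK: "u \<in> K" using powm t u_def by simp
          have ud: "u[^]d = \<one>" using tc t(2) unfolding u_def by (metis nat_pow_pow mult.commute nat_pow_one)
          have "\<exists>g. g \<in> K \<and> (y[^]j \<otimes> g)[^]m = u" using g tj u_def by blast
          then have g0: "g0 j u \<in> K" "(y[^]j \<otimes> g0 j u)[^]m = u" unfolding g0_def by (metis (mono_tags, lifting) someI_ex)+
          have g0c: "g0 j u \<in> carrier G" using g0 KC by blast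
          define v where "v = inv (g0 j u) \<otimes> g"
          have vK: "v \<in> K" using subK g0 g unfolding v_def by (simp add: subgroup.m_closed subgroup.m_inv_closed)
          have e1: "(y[^]j)[^]m \<otimes> (g0 j u)[^]m = (y[^]j)[^]m \<otimes> g[^]m"
            using g0(2) tj u_def y g0c gc by (simp add: pow_mult_distrib m_comm)
          have e2: "(g0 j u)[^]m = g[^]m" using e1 y g0c gc by simp
          have vm: "v[^]m = \<one>" unfolding v_def using g0c gc e2
            by (simp add: pow_mult_distrib m_comm nat_pow_inv)
          have cancel: "g0 j u \<otimes> (inv (g0 j u) \<otimes> g) = g" using g0c gc by (simp add: m_assoc[symmetric])
          have "t = y[^]j \<otimes> g0 j u \<otimes> v" unfolding v_def tj using y g0c gc
            by (simp add: m_assoc cancel)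
          then show "t \<in> (\<lambda>(j,u,v). y[^]j \<otimes> g0 j u \<otimes> v) ` ({..<m} \<times> {u\<in>K. u[^]d = \<one>} \<times> {v\<in>K. v[^]m = \<one>})"
            using j uK ud vK vm by (auto intro!: image_eqI[of _ _ "(j,u,v)"])
        qed
        moreover have "finite ({..<m} \<times> {u\<in>K. u[^]d = \<one>} \<times> {v\<in>K. v[^]m = \<one>})"
          using fin d m by auto
        ultimately show "finite {t\<in>K'. t [^] d = \<one>}" by (meson finite_imageI finite_subset)
      qed
    qed
  next
    case False
    have key: "t \<in> K" if t: "t \<in> K'" and n: "n>0" "t[^](n::nat) = \<one>" for t n
    proof -
      obtain k g where g: "g\<in>K" and tk: "t = y[^](k::int) \<otimes> g" using repr t by blast
      have gc: "g \<in> carrier G" using g KC by blast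
      show ?thesis
      proof (cases "k = 0")
        case True then show ?thesis using tk g gc by simp
      next
        case False
        have "t[^](int n) = y[^](k * int n) \<otimes> g[^](int n)"
          using tk y gc by (simp add: int_pow_distrib int_pow_pow)
        then have "y[^](k * int n) \<otimes> g[^](int n) = \<one>" using n by (simp add: int_pow_int)
        then have "y[^](k * int n) = inv (g[^](int n))" using y gc by (simp add: inv_equality)
        then have w: "y[^](k * int n) \<in> K" using subK g
          by (simp add: subgroup_int_pow_closed subgroup.m_inv_closed)
        have "y[^](\<bar>k * int n\<bar>) \<in> K"
        proof (cases "k * int n \<ge> 0")
          case True then show ?thesis using w by simp
        next
          case False
          then have "\<bar>k * int n\<bar> = - (k * int n)" by simp
          then show ?thesis using w y subK by (simp add: int_pow_neg subgroup.m_inv_closed)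
        qed
        moreover have "y[^](\<bar>k * int n\<bar>) = y[^](nat \<bar>k * int n\<bar>)"
          by (metis abs_ge_zero int_nat_eq int_pow_int)
        moreover have "nat \<bar>k * int n\<bar> > 0" using \<open>k \<noteq> 0\<close> n(1) by (simp add: abs_mult)
        ultimately have "\<exists>m::nat>0. y [^] m \<in> K" by metis
        then show ?thesis using \<open>\<not> (\<exists>m::nat>0. y [^] m \<in> K)\<close> by blast
      qed
    qed
    show ?thesis
    proof (intro conjI)
      show "\<exists>e::nat>0. \<forall>t\<in>K'. (\<exists>n::nat>0. t [^] n = \<one>) \<longrightarrow> t [^] e = \<one>"
        using e key by blast
      show "\<forall>d::nat>0. finite {t\<in>K'. t [^] d = \<one>}"
      proof (intro allI impI)
        fix d :: nat assume d: "d>0"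
        have "{t\<in>K'. t [^] d = \<one>} \<subseteq> {t\<in>K. t [^] d = \<one>}" using key d by blast
        then show "finite {t\<in>K'. t [^] d = \<one>}" using fin d finite_subset by blast
      qed
    qed
  qed
  then show ?case unfolding K'_def .
qed

lemma finite_tor:
  assumes "finitely_generated G"
  shows "finite (tor G)"
proof -
  obtain Y where Y: "finite Y" "Y \<subseteq> carrier G" "generate G Y = carrier G"
    using assms unfolding finitely_generated_def by blast
  obtain e :: nat where e: "e>0" "\<forall>t\<in>carrier G. (\<exists>n::nat>0. t [^] n = \<one>) \<longrightarrow> t [^] e = \<one>"
    and fin: "finite {t\<in>carrier G. t [^] e = \<one>}"
    using tor_fin_aux[OF Y(1,2)] unfolding Y(3) by blast
  have "tor G \<subseteq> {t\<in>carrier G. t [^] e = \<one>}" using e unfolding tor_def by blast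
  then show ?thesis using fin finite_subset by blast
qed


lemma tor_subgroup: "subgroup (tor G) G"
proof (rule subgroupI)
  show "tor G \<subseteq> carrier G" unfolding tor_def by auto
  show "tor G \<noteq> {}" unfolding tor_def by (auto intro!: exI[of _ "1::nat"])
next
  fix a assume "a \<in> tor G"
  then obtain n :: nat where a: "a \<in> carrier G" "n>0" "a[^]n = \<one>" unfolding tor_def by blast
  then show "inv a \<in> tor G" unfolding tor_def by (auto simp: nat_pow_inv intro!: exI[of _ n])
next
  fix a b assume "a \<in> tor G" "b \<in> tor G"
  then obtain n k :: nat where a: "a \<in> carrier G" "n>0" "a[^]n = \<one>" and b: "b \<in> carrier G" "k>0" "b[^]k = \<one>"
    unfolding tor_def by blast
  have "(a \<otimes> b)[^](n*k) = a[^](n*k) \<otimes> b[^](n*k)"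
    using a b by (simp add: pow_mult_distrib m_comm)
  also have "a[^](n*k) = (a[^]n)[^]k" using nat_pow_pow[OF a(1)] by simp
  also have "b[^](n*k) = (b[^]k)[^]n" using nat_pow_pow[OF b(1)] by (simp add: mult.commute)
  also have "\<dots> = \<one>" using a b by simp
  finally show "a \<otimes> b \<in> tor G" using a b unfolding tor_def by (auto intro!: exI[of _ "n*k"])
qed

lemma carrier_TG [simp]: "carrier (tor_group G) = tor G"
  by (simp add: tor_group_def)

lemma mult_TG [simp]: "monoid.mult (tor_group G) = monoid.mult G"
  by (simp add: tor_group_def)

lemma one_TG [simp]: "monoid.one (tor_group G) = monoid.one G"
  by (simp add: tor_group_def)

lemma rcos_TG: "r_coset (tor_group G) = r_coset G"
  by (simp add: r_coset_def[abs_def] tor_group_def)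

lemma setmult_TG: "set_mult (tor_group G) = set_mult G"
  by (simp add: set_mult_def[abs_def] tor_group_def)

lemma pow_TG: "x [^]\<^bsub>tor_group G\<^esub> (n::nat) = x [^] n"
  unfolding tor_group_def by (rule nat_pow_consistent[symmetric])

lemma TG_comm: "comm_group (tor_group G)"
proof -
  have "group (tor_group G)" unfolding tor_group_def
    by (rule subgroup.subgroup_is_group[OF tor_subgroup is_group])
  then show ?thesis
    by (rule group.group_comm_groupI) (auto simp: m_comm tor_def)
qed

lemma rank0:
  assumes "H \<subseteq> tor G"
  shows "rank_of G H = 0"
proof -
  have "{card Y | Y. Y \<subseteq> H \<and> Z_lin_indep G Y} = {0}"
  proof
    show "{0} \<subseteq> {card Y | Y. Y \<subseteq> H \<and> Z_lin_indep G Y}"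
      by (auto simp: Z_lin_indep_def intro!: exI[of _ "{}"])
    show "{card Y | Y. Y \<subseteq> H \<and> Z_lin_indep G Y} \<subseteq> {0}"
    proof clarify
      fix Y assume Y: "Y \<subseteq> H" "Z_lin_indep G Y"
      have "Y = {}"
      proof (rule ccontr)
        assume "Y \<noteq> {}"
        then obtain x where x: "x \<in> Y" by blast
        then obtain n :: nat where n: "x \<in> carrier G" "n>0" "x[^]n = \<one>" using Y assms unfolding tor_def by blast
        have fin: "finite Y" and YC: "Y \<subseteq> carrier G" using Y(2) unfolding Z_lin_indep_def by auto
        define c where "c z = (if z = x then int n else 0)" for z
        have "finprod G (\<lambda>z. z [^] c z) Y = finprod G (\<lambda>z. if x = z then (\<lambda>z. z [^] n) z else \<one>) Y"
          by (rule finprod_cong') (use YC in \<open>auto simp: c_def int_pow_int\<close>)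
        also have "\<dots> = x [^] n" by (rule finprod_singleton) (use x fin YC in auto)
        finally have "finprod G (\<lambda>z. z [^] c z) Y = \<one>" using n by simp
        then have "c x = 0" using Y(2) x unfolding Z_lin_indep_def by blast
        then show False using n by (simp add: c_def)
      qed
      then show "card Y = 0" by simp
    qed
  qed
  then show ?thesis unfolding rank_of_def by simp
qed

lemma Mod_tor_eq:
  assumes H: "subgroup H G" "H \<subseteq> tor G"
  shows "tor_group (G Mod H) = tor_group G Mod H"
proof -
  have nH: "H \<lhd> G" using H(1) by (rule subgroup_imp_normal)
  have pi: "(\<lambda>a. H #> a) \<in> hom G (G Mod H)" using normal.r_coset_hom_Mod[OF nH] .
  have gQ: "group (G Mod H)" using normal.factorgroup_is_group[OF nH] .
  have powc: "(H #> x) [^]\<^bsub>G Mod H\<^esub> n = H #> (x [^] n)" if "x \<in> carrier G" for x and n::nat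
    using hom_nat_pow[OF pi that is_group gQ] by simp
  have onec: "H #> x = H \<longleftrightarrow> x \<in> H" if "x \<in> carrier G" for x
    using coset_join1[OF _ that H(1)] coset_join2[OF that H(1)] by blast
  have car: "tor (G Mod H) = rcosets\<^bsub>tor_group G\<^esub> H"
  proof
    show "tor (G Mod H) \<subseteq> rcosets\<^bsub>tor_group G\<^esub> H"
    proof
      fix c assume "c \<in> tor (G Mod H)"
      then obtain n::nat where c: "c \<in> rcosets H" "n>0" "c [^]\<^bsub>G Mod H\<^esub> n = H"
        unfolding tor_def by (auto simp: FactGroup_def)
      then obtain x where x: "x \<in> carrier G" "c = H #> x" unfolding RCOSETS_def by auto
      have "x [^] n \<in> H" using c x powc onec by auto
      then obtain k::nat where k: "k>0" "(x[^]n)[^]k = \<one>" using H(2) unfolding tor_def by auto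
      have "x [^] (n*k) = \<one>" using k x by (simp add: nat_pow_pow)
      then have "x \<in> tor G" using x k c(2) unfolding tor_def by (auto intro!: exI[of _ "n*k"])
      then show "c \<in> rcosets\<^bsub>tor_group G\<^esub> H" using x unfolding RCOSETS_def by (auto simp: rcos_TG)
    qed
  next
    show "rcosets\<^bsub>tor_group G\<^esub> H \<subseteq> tor (G Mod H)"
    proof
      fix c assume "c \<in> rcosets\<^bsub>tor_group G\<^esub> H"
      then obtain x where x: "x \<in> tor G" "c = H #> x" unfolding RCOSETS_def by (auto simp: rcos_TG)
      then obtain n::nat where n: "x \<in> carrier G" "n>0" "x[^]n = \<one>" unfolding tor_def by auto
      have "c \<in> carrier (G Mod H)" using x n unfolding FactGroup_def RCOSETS_def by auto
      moreover have "c [^]\<^bsub>G Mod H\<^esub> n = \<one>\<^bsub>G Mod H\<^esub>"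
        using powc[OF n(1)] n x onec H(1) by (simp add: FactGroup_def subgroup.one_closed)
      ultimately show "c \<in> tor (G Mod H)" using n unfolding tor_def by auto
    qed
  qed
  have "tor_group (G Mod H) = (G Mod H)\<lparr>carrier := rcosets\<^bsub>tor_group G\<^esub> H\<rparr>"
    by (simp only: tor_group_def[of "G Mod H"] car)
  also have "\<dots> = tor_group G Mod H" by (simp add: FactGroup_def setmult_TG)
  finally show ?thesis .
qed

lemma finite_Homs:
  assumes fin: "finite (tor G)" and K: "group K" and tw: "torsion_wise_finite K"
  shows "finite (Homs (tor_group G) K)"
proof -
  interpret TGi: comm_group "tor_group G" by (rule TG_comm)
  define N where "N = order (tor_group G)"
  have "\<one> \<in> tor G" using subgroup.one_closed[OF tor_subgroup] .
  then have N: "N > 0" unfolding N_def order_def using fin by (auto simp: card_gt_0_iff)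
  have "Homs (tor_group G) K \<subseteq> PiE (tor G) (\<lambda>_. {g \<in> carrier K. g [^]\<^bsub>K\<^esub> N = \<one>\<^bsub>K\<^esub>})"
  proof
    fix \<psi> assume "\<psi> \<in> Homs (tor_group G) K"
    then have h: "\<psi> \<in> hom (tor_group G) K" and e: "\<psi> \<in> extensional (tor G)" unfolding Homs_def by auto
    have "\<psi> x \<in> carrier K \<and> \<psi> x [^]\<^bsub>K\<^esub> N = \<one>\<^bsub>K\<^esub>" if x: "x \<in> tor G" for x
    proof
      show "\<psi> x \<in> carrier K" using hom_in_carrier[OF h] x by simp
      have "\<psi> x [^]\<^bsub>K\<^esub> N = \<psi> (x [^]\<^bsub>tor_group G\<^esub> N)"
        using hom_nat_pow[OF h _ TGi.is_group K] x by simp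
      also have "\<dots> = \<psi> \<one>\<^bsub>tor_group G\<^esub>" unfolding N_def using x by (simp add: TGi.pow_order_eq_1)
      also have "\<dots> = \<one>\<^bsub>K\<^esub>" by (rule hom_one[OF h TGi.is_group K])
      finally show "\<psi> x [^]\<^bsub>K\<^esub> N = \<one>\<^bsub>K\<^esub>" .
    qed
    then show "\<psi> \<in> PiE (tor G) (\<lambda>_. {g \<in> carrier K. g [^]\<^bsub>K\<^esub> N = \<one>\<^bsub>K\<^esub>})"
      using e by (auto simp: PiE_def Pi_def)
  qed
  moreover have "finite (PiE (tor G) (\<lambda>_. {g \<in> carrier K. g [^]\<^bsub>K\<^esub> N = \<one>\<^bsub>K\<^esub>}))"
    by (rule finite_PiE) (use fin tw N in \<open>auto simp: torsion_wise_finite_def\<close>)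
  ultimately show ?thesis by (rule finite_subset)
qed

lemma vanish_generate:
  assumes K: "group K" and psi: "\<psi> \<in> hom (tor_group G) K" and W: "W \<subseteq> tor G"
  shows "(\<forall>h\<in>generate G W. \<psi> h = \<one>\<^bsub>K\<^esub>) \<longleftrightarrow> (\<forall>x\<in>W. \<psi> x = \<one>\<^bsub>K\<^esub>)"
proof
  assume "\<forall>h\<in>generate G W. \<psi> h = \<one>\<^bsub>K\<^esub>" then show "\<forall>x\<in>W. \<psi> x = \<one>\<^bsub>K\<^esub>"
    using generate.incl[of _ W G] by blast
next
  assume A: "\<forall>x\<in>W. \<psi> x = \<one>\<^bsub>K\<^esub>"
  interpret TGi: comm_group "tor_group G" by (rule TG_comm)
  have gh: "group_hom (tor_group G) K \<psi>"
    by (intro group_hom.intro group_hom_axioms.intro TGi.is_group K psi)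
  have "subgroup (kernel (tor_group G) K \<psi>) (tor_group G)" by (rule group_hom.subgroup_kernel[OF gh])
  moreover have "W \<subseteq> kernel (tor_group G) K \<psi>" using W A unfolding kernel_def by auto
  ultimately have "generate (tor_group G) W \<subseteq> kernel (tor_group G) K \<psi>"
    using TGi.generate_subgroup_incl by blast
  moreover have "generate (tor_group G) W = generate G W"
    unfolding tor_group_def by (rule generate_consistent[OF W tor_subgroup])
  ultimately show "\<forall>h\<in>generate G W. \<psi> h = \<one>\<^bsub>K\<^esub>" unfolding kernel_def by auto
qed

lemma Homs_bij:
  fixes K :: "('c,'d) monoid_scheme"
  assumes K: "group K" and H: "subgroup H G" "H \<subseteq> tor G"
  shows "bij_betw (\<lambda>\<phi>. \<lambda>x\<in>tor G. \<phi> (H #> x)) (Homs (tor_group G Mod H) K)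
           {\<psi> \<in> Homs (tor_group G) K. \<forall>h\<in>H. \<psi> h = \<one>\<^bsub>K\<^esub>}"
proof -
  define TG where "TG = tor_group G"
  define Q where "Q = TG Mod H"
  define F where "F = (\<lambda>\<phi> :: 'a set \<Rightarrow> 'c. \<lambda>x\<in>tor G. \<phi> (H #> x))"
  interpret TGi: comm_group TG unfolding TG_def by (rule TG_comm)
  have cTG [simp]: "carrier TG = tor G" unfolding TG_def by simp
  have mTG [simp]: "x \<otimes>\<^bsub>TG\<^esub> y = x \<otimes> y" for x y unfolding TG_def by simp
  have subH: "subgroup H TG" unfolding TG_def tor_group_def
    by (rule subgroup_incl[OF H(1) tor_subgroup H(2)])
  have nH: "H \<lhd> TG" by (rule TGi.subgroup_imp_normal[OF subH])
  have gQ: "group Q" unfolding Q_def by (rule normal.factorgroup_is_group[OF nH])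
  have rc: "H #>\<^bsub>TG\<^esub> a = H #> a" for a unfolding TG_def rcos_TG ..
  have pi: "(\<lambda>a. H #> a) \<in> hom TG Q" using normal.r_coset_hom_Mod[OF nH] unfolding Q_def rc .
  have carQ: "carrier Q = (\<lambda>a. H #> a) ` tor G" unfolding Q_def FactGroup_def RCOSETS_def rc by auto
  have oneQ: "\<one>\<^bsub>Q\<^esub> = H" unfolding Q_def FactGroup_def by simp
  have torC: "x \<in> tor G \<Longrightarrow> x \<in> carrier G" for x unfolding tor_def by auto
  have piQ: "x \<in> tor G \<Longrightarrow> H #> x \<in> carrier Q" for x using carQ by auto
  have pimult: "x \<in> tor G \<Longrightarrow> y \<in> tor G \<Longrightarrow> H #> (x \<otimes> y) = (H #> x) \<otimes>\<^bsub>Q\<^esub> (H #> y)" for x y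
    using hom_mult[OF pi, of x y] by simp
  have target: "F \<phi> \<in> {\<psi> \<in> Homs TG K. \<forall>h\<in>H. \<psi> h = \<one>\<^bsub>K\<^esub>}" if "\<phi> \<in> Homs Q K" for \<phi>
  proof -
    have h: "\<phi> \<in> hom Q K" using that unfolding Homs_def by auto
    have "F \<phi> \<in> hom TG K"
    proof (rule homI)
      fix x assume "x \<in> carrier TG"
      then show "F \<phi> x \<in> carrier K" unfolding F_def using hom_in_carrier[OF h piQ] by simp
    next
      fix x y assume "x \<in> carrier TG" "y \<in> carrier TG"
      then show "F \<phi> (x \<otimes>\<^bsub>TG\<^esub> y) = F \<phi> x \<otimes>\<^bsub>K\<^esub> F \<phi> y"
        unfolding F_def using TGi.m_closed[of x y] pimult hom_mult[OF h] piQ by simp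
    qed
    moreover have "F \<phi> \<in> extensional (carrier TG)" unfolding F_def by simp
    moreover have "F \<phi> h = \<one>\<^bsub>K\<^esub>" if "h \<in> H" for h
    proof -
      have "h \<in> tor G" using that H(2) by blast
      then have "F \<phi> h = \<phi> (H #> h)" unfolding F_def by simp
      also have "H #> h = \<one>\<^bsub>Q\<^esub>" unfolding oneQ using coset_join2[OF _ H(1) that] that H(2) torC by blast
      also have "\<phi> \<one>\<^bsub>Q\<^esub> = \<one>\<^bsub>K\<^esub>" by (rule hom_one[OF h gQ K])
      finally show ?thesis .
    qed
    ultimately show ?thesis unfolding Homs_def by auto
  qed
  have inj: "inj_on F (Homs Q K)"
  proof (rule inj_onI)
    fix \<phi>1 \<phi>2 assume 1: "\<phi>1 \<in> Homs Q K" and 2: "\<phi>2 \<in> Homs Q K" and eq: "F \<phi>1 = F \<phi>2"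
    show "\<phi>1 = \<phi>2"
    proof (rule extensionalityI[where A = "carrier Q"])
      show "\<phi>1 \<in> extensional (carrier Q)" "\<phi>2 \<in> extensional (carrier Q)" using 1 2 unfolding Homs_def by auto
      fix c assume "c \<in> carrier Q"
      then obtain x where x: "x \<in> tor G" "c = H #> x" using carQ by auto
      have "F \<phi>1 x = F \<phi>2 x" using eq by simp
      then show "\<phi>1 c = \<phi>2 c" using x unfolding F_def by simp
    qed
  qed
  have surj: "\<psi> \<in> F ` Homs Q K" if "\<psi> \<in> {\<psi> \<in> Homs TG K. \<forall>h\<in>H. \<psi> h = \<one>\<^bsub>K\<^esub>}" for \<psi>
  proof -
    have hp: "\<psi> \<in> hom TG K" and ep: "\<psi> \<in> extensional (tor G)" and van: "\<And>h. h \<in> H \<Longrightarrow> \<psi> h = \<one>\<^bsub>K\<^esub>"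
      using that unfolding Homs_def by auto
    define \<phi> where "\<phi> = (\<lambda>c\<in>carrier Q. \<psi> (SOME x. x \<in> tor G \<and> c = H #> x))"
    have key: "\<phi> (H #> x) = \<psi> x" if x: "x \<in> tor G" for x
    proof -
      define x' where "x' = (SOME x'. x' \<in> tor G \<and> H #> x = H #> x')"
      have "\<exists>x'. x' \<in> tor G \<and> H #> x = H #> x'" using x by blast
      then have x': "x' \<in> tor G" "H #> x = H #> x'" unfolding x'_def by (metis (mono_tags, lifting) someI_ex)+
      have "x' \<in> H #> x" using repr_independenceD[OF H(1) torC[OF x'(1)] x'(2)] .
      then obtain h where h: "h \<in> H" "x' = h \<otimes> x" unfolding r_coset_def by auto
      have ht: "h \<in> tor G" using h H(2) by blast
      have "\<psi> x' = \<psi> h \<otimes>\<^bsub>K\<^esub> \<psi> x" using hom_mult[OF hp, of h x] ht x h by simp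
      also have "\<dots> = \<psi> x" using van[OF h(1)] hom_in_carrier[OF hp, of x] x monoid.l_one[OF group.is_monoid[OF K]] by simp
      finally have "\<psi> x' = \<psi> x" .
      then show ?thesis using piQ[OF x] unfolding \<phi>_def x'_def by simp
    qed
    have "\<phi> \<in> hom Q K"
    proof (rule homI)
      fix c assume "c \<in> carrier Q"
      then obtain x where x: "x \<in> tor G" "c = H #> x" using carQ by auto
      then show "\<phi> c \<in> carrier K" using key hom_in_carrier[OF hp, of x] by simp
    next
      fix c d assume "c \<in> carrier Q" "d \<in> carrier Q"
      then obtain x y where x: "x \<in> tor G" "c = H #> x" and y: "y \<in> tor G" "d = H #> y" using carQ by auto
      have xy: "x \<otimes> y \<in> tor G" using TGi.m_closed[of x y] x y by simp
      have "c \<otimes>\<^bsub>Q\<^esub> d = H #> (x \<otimes> y)" using pimult x y by simp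
      then show "\<phi> (c \<otimes>\<^bsub>Q\<^esub> d) = \<phi> c \<otimes>\<^bsub>K\<^esub> \<phi> d"
        using key[OF xy] key[OF x(1)] key[OF y(1)] x y hom_mult[OF hp, of x y] by simp
    qed
    moreover have "\<phi> \<in> extensional (carrier Q)" unfolding \<phi>_def by simp
    ultimately have "\<phi> \<in> Homs Q K" unfolding Homs_def by auto
    moreover have "F \<phi> = \<psi>"
    proof (rule extensionalityI[where A = "tor G"])
      show "F \<phi> \<in> extensional (tor G)" unfolding F_def by simp
      show "\<psi> \<in> extensional (tor G)" by (rule ep)
      fix x assume "x \<in> tor G" then show "F \<phi> x = \<psi> x" unfolding F_def using key by simp
    qed
    ultimately show ?thesis by blast
  qed
  have "bij_betw F (Homs Q K) {\<psi> \<in> Homs TG K. \<forall>h\<in>H. \<psi> h = \<one>\<^bsub>K\<^esub>}"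
    unfolding bij_betw_def using inj target surj by blast
  then show ?thesis unfolding F_def Q_def TG_def .
qed

end
lemma sum_pow_Pow:
  fixes a :: "'r::comm_ring_1"
  assumes "finite T"
  shows "(\<Sum>S\<in>Pow T. a ^ card S) = (a + 1) ^ card T"
proof -
  have "(\<Prod>i\<in>T. a + 1) = (\<Sum>S\<in>Pow T. (\<Prod>i\<in>S. a) * (\<Prod>i\<in>T-S. 1))"
    by (rule prod_add[OF assms])
  then show ?thesis by simp
qed

theorem mainTheorem8:
  fixes \<Gamma> :: "'a monoid" and G :: "'g monoid" and As :: "'a list"
    and x y :: "'r::comm_ring_1"
  assumes "comm_group \<Gamma>" and "finitely_generated \<Gamma>"
    and "comm_group G" and "torsion_wise_finite G"
    and "set As \<subseteq> tor \<Gamma>"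
  shows "tutteG \<Gamma> As G x y =
    (\<Sum>k = 0..length As.
       of_nat (\<Sum>S\<in>{S. S \<subseteq> {0..<length As} \<and> card S = k}. card (M_contr \<Gamma> As S G)) * y ^ k)"
proof -
  interpret Gam: comm_group \<Gamma> by fact
  interpret Gi: comm_group G by fact
  define n where "n = length As"
  define I where "I = {0..<n}"
  define P where "P = Homs (tor_group \<Gamma>) G"
  define Z where "Z \<psi> = {i\<in>I. \<psi> (As!i) = \<one>\<^bsub>G\<^esub>}" for \<psi> :: "'a \<Rightarrow> 'g"
  have finI: "finite I" unfolding I_def by simp
  have ZI: "Z \<psi> \<subseteq> I" for \<psi> unfolding Z_def by auto
  have finT: "finite (tor \<Gamma>)" by (rule Gam.finite_tor[OF assms(2)])
  have finP: "finite P" unfolding P_def by (rule Gam.finite_Homs[OF finT Gi.is_group assms(4)])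
  have Asi: "As!i \<in> tor \<Gamma>" if "i \<in> I" for i using assms(5) nth_mem that unfolding I_def n_def by auto
  have torC: "tor \<Gamma> \<subseteq> carrier \<Gamma>" unfolding tor_def by auto
  have spanH: "subgroup (span_idx \<Gamma> As S) \<Gamma> \<and> span_idx \<Gamma> As S \<subseteq> tor \<Gamma>" if "S \<subseteq> I" for S
  proof -
    have sub: "(\<lambda>i. As!i) ` S \<subseteq> tor \<Gamma>" using Asi that by auto
    show ?thesis unfolding span_idx_def
      using Gam.generate_is_subgroup[of "(\<lambda>i. As!i) ` S"] sub torC
        Gam.generate_subgroup_incl[OF sub Gam.tor_subgroup] by auto
  qed
  have vanish: "(\<forall>h\<in>span_idx \<Gamma> As S. \<psi> h = \<one>\<^bsub>G\<^esub>) \<longleftrightarrow> S \<subseteq> Z \<psi>" if "S \<subseteq> I" "\<psi> \<in> P" for S \<psi>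
  proof -
    have sub: "(\<lambda>i. As!i) ` S \<subseteq> tor \<Gamma>" using Asi that by auto
    have "\<psi> \<in> hom (tor_group \<Gamma>) G" using that unfolding P_def Homs_def by auto
    then have e: "(\<forall>h\<in>generate \<Gamma> ((\<lambda>i. As!i) ` S). \<psi> h = \<one>\<^bsub>G\<^esub>) \<longleftrightarrow> (\<forall>z\<in>(\<lambda>i. As!i) ` S. \<psi> z = \<one>\<^bsub>G\<^esub>)"
      by (rule Gam.vanish_generate[OF Gi.is_group _ sub])
    show ?thesis unfolding span_idx_def e
      using that(1) unfolding Z_def by auto
  qed
  have m_eq: "m_mult \<Gamma> As S G = card {\<psi>\<in>P. S \<subseteq> Z \<psi>}" if S: "S \<subseteq> I" for S
  proof -
    note H = spanH[OF S]
    have "m_mult \<Gamma> As S G = card (Homs (tor_group \<Gamma> Mod span_idx \<Gamma> As S) G)"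
      unfolding m_mult_def Gam.Mod_tor_eq[OF conjunct1[OF H] conjunct2[OF H]] ..
    also have "\<dots> = card {\<psi> \<in> P. \<forall>h\<in>span_idx \<Gamma> As S. \<psi> h = \<one>\<^bsub>G\<^esub>}"
      unfolding P_def by (rule bij_betw_same_card[OF Gam.Homs_bij[OF Gi.is_group conjunct1[OF H] conjunct2[OF H]]])
    also have "{\<psi> \<in> P. \<forall>h\<in>span_idx \<Gamma> As S. \<psi> h = \<one>\<^bsub>G\<^esub>} = {\<psi>\<in>P. S \<subseteq> Z \<psi>}"
      using vanish[OF S] by auto
    finally show ?thesis .
  qed
  have M_eq: "card (M_contr \<Gamma> As S G) = card {\<psi>\<in>P. Z \<psi> = S}" if S: "S \<subseteq> I" for S
  proof -
    note H = spanH[OF S]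
    define Hs where "Hs = span_idx \<Gamma> As S"
    define F where "F = (\<lambda>\<phi> :: 'a set \<Rightarrow> 'g. \<lambda>x\<in>tor \<Gamma>. \<phi> (Hs #>\<^bsub>\<Gamma>\<^esub> x))"
    have B: "bij_betw F (Homs (tor_group \<Gamma> Mod Hs) G) {\<psi> \<in> P. \<forall>h\<in>Hs. \<psi> h = \<one>\<^bsub>G\<^esub>}"
      unfolding F_def P_def Hs_def by (rule Gam.Homs_bij[OF Gi.is_group conjunct1[OF H] conjunct2[OF H]])
    have Meq: "M_contr \<Gamma> As S G = {\<phi> \<in> Homs (tor_group \<Gamma> Mod Hs) G. \<forall>i\<in>I - S. \<phi> (Hs #>\<^bsub>\<Gamma>\<^esub> (As ! i)) \<noteq> \<one>\<^bsub>G\<^esub>}"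
      unfolding M_contr_def Hs_def I_def n_def ..
    have inj: "inj_on F (M_contr \<Gamma> As S G)"
      using bij_betw_imp_inj_on[OF B] unfolding Meq by (rule inj_on_subset) auto
    have FA: "F \<phi> (As!i) = \<phi> (Hs #>\<^bsub>\<Gamma>\<^esub> (As ! i))" if "i \<in> I" for \<phi> i
      unfolding F_def using Asi[OF that] by simp
    have "F ` M_contr \<Gamma> As S G = {\<psi>\<in>P. Z \<psi> = S}"
    proof
      show "F ` M_contr \<Gamma> As S G \<subseteq> {\<psi>\<in>P. Z \<psi> = S}"
      proof
        fix \<psi> assume "\<psi> \<in> F ` M_contr \<Gamma> As S G"
        then obtain \<phi> where \<phi>: "\<phi> \<in> Homs (tor_group \<Gamma> Mod Hs) G"
          "\<forall>i\<in>I - S. \<phi> (Hs #>\<^bsub>\<Gamma>\<^esub> (As ! i)) \<noteq> \<one>\<^bsub>G\<^esub>" and psi: "\<psi> = F \<phi>"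
          unfolding Meq by auto
        have "\<psi> \<in> {\<psi> \<in> P. \<forall>h\<in>Hs. \<psi> h = \<one>\<^bsub>G\<^esub>}" using bij_betw_imp_surj_on[OF B] \<phi>(1) psi by blast
        then have "\<psi> \<in> P" "\<forall>h\<in>Hs. \<psi> h = \<one>\<^bsub>G\<^esub>" by auto
        then have "\<psi> \<in> P" "S \<subseteq> Z \<psi>" using vanish[OF S] unfolding Hs_def by blast+
        moreover have "Z \<psi> \<subseteq> S" using \<phi>(2) FA psi unfolding Z_def by auto
        ultimately show "\<psi> \<in> {\<psi>\<in>P. Z \<psi> = S}" by auto
      qed
    next
      show "{\<psi>\<in>P. Z \<psi> = S} \<subseteq> F ` M_contr \<Gamma> As S G"
      proof
        fix \<psi> assume "\<psi> \<in> {\<psi>\<in>P. Z \<psi> = S}"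
        then have psi: "\<psi> \<in> P" "Z \<psi> = S" by auto
        have "S \<subseteq> Z \<psi>" using psi(2) by simp
        then have "\<forall>h\<in>Hs. \<psi> h = \<one>\<^bsub>G\<^esub>" using vanish[OF S psi(1)] unfolding Hs_def by blast
        then have "\<psi> \<in> {\<psi> \<in> P. \<forall>h\<in>Hs. \<psi> h = \<one>\<^bsub>G\<^esub>}" using psi(1) by blast
        then have "\<psi> \<in> F ` Homs (tor_group \<Gamma> Mod Hs) G" using bij_betw_imp_surj_on[OF B] by simp
        then obtain \<phi> where \<phi>: "\<phi> \<in> Homs (tor_group \<Gamma> Mod Hs) G" "F \<phi> = \<psi>" by blast
        have "\<forall>i\<in>I - S. \<phi> (Hs #>\<^bsub>\<Gamma>\<^esub> (As ! i)) \<noteq> \<one>\<^bsub>G\<^esub>"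
          using FA \<phi>(2) psi(2) unfolding Z_def by auto
        then have "\<phi> \<in> M_contr \<Gamma> As S G" unfolding Meq using \<phi>(1) by auto
        then show "\<psi> \<in> F ` M_contr \<Gamma> As S G" using \<phi>(2) by blast
      qed
    qed
    then show ?thesis using card_image[OF inj] by simp
  qed
  have rk: "rank_of \<Gamma> (span_idx \<Gamma> As S) = 0" if "S \<subseteq> I" for S
    using Gam.rank0 spanH[OF that] by blast
  have cardsum: "of_nat (card {\<psi>\<in>P. R \<psi>}) = (\<Sum>\<psi>\<in>P. if R \<psi> then (1::'r) else 0)" for R
  proof -
    have "(\<Sum>\<psi>\<in>P. if R \<psi> then (1::'r) else 0) = (\<Sum>\<psi>\<in>{\<psi>\<in>P. R \<psi>}. 1)"
      by (rule sum.inter_filter[OF finP, symmetric])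
    then show ?thesis by simp
  qed
  have ifmult: "(if Q then 1 else 0) * a = (if Q then a else (0::'r))" for Q a by simp
  have "tutteG \<Gamma> As G x y = (\<Sum>S\<in>Pow I. of_nat (card {\<psi>\<in>P. S \<subseteq> Z \<psi>}) * (y - 1) ^ card S)"
    unfolding tutteG_def I_def[symmetric] n_def[symmetric]
    using rk m_eq I_def by (intro sum.cong) auto
  also have "\<dots> = (\<Sum>S\<in>Pow I. \<Sum>\<psi>\<in>P. if S \<subseteq> Z \<psi> then (y - 1) ^ card S else 0)"
    unfolding cardsum by (simp add: sum_distrib_right ifmult)
  also have "\<dots> = (\<Sum>\<psi>\<in>P. \<Sum>S\<in>Pow I. if S \<subseteq> Z \<psi> then (y - 1) ^ card S else 0)"
    by (rule sum.swap)
  also have "\<dots> = (\<Sum>\<psi>\<in>P. \<Sum>S\<in>Pow (Z \<psi>). (y - 1) ^ card S)"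
  proof (rule sum.cong[OF refl])
    fix \<psi> assume "\<psi> \<in> P"
    have "{S\<in>Pow I. S \<subseteq> Z \<psi>} = Pow (Z \<psi>)" using ZI by auto
    then show "(\<Sum>S\<in>Pow I. if S \<subseteq> Z \<psi> then (y - 1) ^ card S else 0) = (\<Sum>S\<in>Pow (Z \<psi>). (y - 1) ^ card S)"
      using finI by (simp add: sum.inter_filter[symmetric])
  qed
  also have "\<dots> = (\<Sum>\<psi>\<in>P. y ^ card (Z \<psi>))"
  proof (rule sum.cong[OF refl])
    fix \<psi>
    have "finite (Z \<psi>)" using finI ZI[of \<psi>] by (rule finite_subset[rotated])
    then show "(\<Sum>S\<in>Pow (Z \<psi>). (y - 1) ^ card S) = y ^ card (Z \<psi>)"
      using sum_pow_Pow[of "Z \<psi>" "y - 1"] by simp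
  qed
  finally have L: "tutteG \<Gamma> As G x y = (\<Sum>\<psi>\<in>P. y ^ card (Z \<psi>))" .
  define Sk where "Sk k = {S. S \<subseteq> I \<and> card S = k}" for k
  have finSk: "finite (Sk k)" for k unfolding Sk_def using finI by (auto intro: finite_subset[of _ "Pow I"])
  have "(\<Sum>k = 0..n. of_nat (\<Sum>S\<in>Sk k. card (M_contr \<Gamma> As S G)) * y ^ k)
      = (\<Sum>k = 0..n. \<Sum>S\<in>Sk k. \<Sum>\<psi>\<in>P. if Z \<psi> = S then y ^ k else 0)"
  proof (rule sum.cong[OF refl])
    fix k
    have "(\<Sum>S\<in>Sk k. card (M_contr \<Gamma> As S G)) = (\<Sum>S\<in>Sk k. card {\<psi>\<in>P. Z \<psi> = S})"
      using M_eq unfolding Sk_def by (intro sum.cong) auto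
    then show "of_nat (\<Sum>S\<in>Sk k. card (M_contr \<Gamma> As S G)) * y ^ k = (\<Sum>S\<in>Sk k. \<Sum>\<psi>\<in>P. if Z \<psi> = S then y ^ k else 0)"
      by (simp add: of_nat_sum cardsum sum_distrib_right ifmult)
  qed
  also have "\<dots> = (\<Sum>k = 0..n. \<Sum>\<psi>\<in>P. \<Sum>S\<in>Sk k. if Z \<psi> = S then y ^ k else 0)"
    by (intro sum.cong[OF refl] sum.swap)
  also have "\<dots> = (\<Sum>k = 0..n. \<Sum>\<psi>\<in>P. if card (Z \<psi>) = k then y ^ k else 0)"
  proof (intro sum.cong[OF refl])
    fix k \<psi>
    have "(\<Sum>S\<in>Sk k. if Z \<psi> = S then y ^ k else 0) = (if Z \<psi> \<in> Sk k then y ^ k else 0)"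
      using finSk by (simp add: sum.delta)
    also have "(Z \<psi> \<in> Sk k) = (card (Z \<psi>) = k)" unfolding Sk_def using ZI by auto
    finally show "(\<Sum>S\<in>Sk k. if Z \<psi> = S then y ^ k else 0) = (if card (Z \<psi>) = k then y ^ k else 0)" .
  qed
  also have "\<dots> = (\<Sum>\<psi>\<in>P. \<Sum>k = 0..n. if card (Z \<psi>) = k then y ^ k else 0)"
    by (rule sum.swap)
  also have "\<dots> = (\<Sum>\<psi>\<in>P. y ^ card (Z \<psi>))"
  proof (rule sum.cong[OF refl])
    fix \<psi>
    have "card (Z \<psi>) \<le> n" using card_mono[OF finI ZI[of \<psi>]] unfolding I_def by simp
    then show "(\<Sum>k = 0..n. if card (Z \<psi>) = k then y ^ k else 0) = y ^ card (Z \<psi>)"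
      by (simp add: sum.delta)
  qed
  finally show ?thesis using L unfolding Sk_def I_def n_def by simp
qed

end
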